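(* For all $x,y\in\mathbb{C}$ and all integers $n\ge0$, \[ \sum_{k=0}^n x^k\big(yL_{2k}(y)+(x(y^2+2)-2)F_{2k+2}(y)\big)=x^{n+1}(y^2+2)F_{2n+2}(y) \] and \[ \sum_{k=0}^n x^k\big(y(y^2+4)F_{2k}(y)+(x(y^2+2)-2)L_{2k+2}(y)\big)=(y^2+2)\big(x^{n+1}L_{2n+2}(y)-2\big). \]
   Context: The Fibonacci polynomials $F_n(y)$ and Lucas polynomials $L_n(y)$ are defined by $F_0(y)=0$, $F_1(y)=1$, $L_0(y)=2$, $L_1(y)=y$ and $W_n(y)=yW_{n-1}(y)+W_{n-2}(y)$ for $n\ge2$ (for $W=F$ and $W=L$). *)

theory Defs
  imports Complex_Main
begin

fun fibpoly :: "nat \<Rightarrow> complex \<Rightarrow> complex" where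
  "fibpoly 0 y = 0"
| "fibpoly (Suc 0) y = 1"
| "fibpoly (Suc (Suc n)) y = y * fibpoly (Suc n) y + fibpoly n y"

fun lucpoly :: "nat \<Rightarrow> complex \<Rightarrow> complex" where
  "lucpoly 0 y = 2"
| "lucpoly (Suc 0) y = y"
| "lucpoly (Suc (Suc n)) y = y * lucpoly (Suc n) y + lucpoly n y"

end

theory Submission
  imports Defs
begin

lemma luc_fib: "lucpoly n y = 2 * fibpoly (Suc n) y - y * fibpoly n y"
  by (induction n y rule: lucpoly.induct) (auto simp: algebra_simps)

lemma key1: "y * lucpoly (2*n+2) y - 2 * fibpoly (2*n+4) y + (y^2+2) * fibpoly (2*n+2) y = 0"
proof -
  have e: "2*n+4 = Suc (Suc (2*n+2))" "2*n+3 = Suc (2*n+2)" by auto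
  show ?thesis unfolding e luc_fib by (simp add: algebra_simps power2_eq_square)
qed

lemma key2: "y * (y^2+4) * fibpoly (2*n+2) y - 2 * lucpoly (2*n+4) y + (y^2+2) * lucpoly (2*n+2) y = 0"
proof -
  have e: "2*n+4 = Suc (Suc (2*n+2))" by auto
  show ?thesis unfolding e luc_fib by (simp add: algebra_simps power2_eq_square)
qed

theorem corollary6:
  fixes x y :: complex and n :: nat
  shows "((\<Sum>k=0..n. x ^ k * (y * lucpoly (2*k) y + (x * (y^2 + 2) - 2) * fibpoly (2*k+2) y))
           = x ^ (n+1) * (y^2 + 2) * fibpoly (2*n+2) y)
       \<and> ((\<Sum>k=0..n. x ^ k * (y * (y^2 + 4) * fibpoly (2*k) y + (x * (y^2 + 2) - 2) * lucpoly (2*k+2) y))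
           = (y^2 + 2) * (x ^ (n+1) * lucpoly (2*n+2) y - 2))"
proof (induction n)
  case 0
  then show ?case by (simp add: numeral_eq_Suc algebra_simps power2_eq_square)
next
  case (Suc n)
  have e: "2 * Suc n + 2 = 2*n+4" "2 * Suc n = 2*n+2" by auto
  note k1 = key1[of y n] and k2 = key2[of y n]
  have A: "x ^ (n+1) * (y^2+2) * fibpoly (2*n+2) y + x^(n+1) * (y * lucpoly (2*n+2) y + (x * (y^2 + 2) - 2) * fibpoly (2*n+4) y)
      = x^(n+2) * (y^2+2) * fibpoly (2*n+4) y"
  proof -
    have "x ^ (n+1) * (y^2+2) * fibpoly (2*n+2) y + x^(n+1) * (y * lucpoly (2*n+2) y + (x * (y^2 + 2) - 2) * fibpoly (2*n+4) y)
      = x^(n+1) * (y * lucpoly (2*n+2) y - 2 * fibpoly (2*n+4) y + (y^2+2) * fibpoly (2*n+2) y) + x^(n+2) * (y^2+2) * fibpoly (2*n+4) y"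
      by (simp add: algebra_simps)
    then show ?thesis using k1 by simp
  qed
  have B: "(y^2 + 2) * (x ^ (n+1) * lucpoly (2*n+2) y - 2) + x^(n+1) * (y * (y^2 + 4) * fibpoly (2*n+2) y + (x * (y^2 + 2) - 2) * lucpoly (2*n+4) y)
      = (y^2 + 2) * (x ^ (n+2) * lucpoly (2*n+4) y - 2)"
  proof -
    have "(y^2 + 2) * (x ^ (n+1) * lucpoly (2*n+2) y - 2) + x^(n+1) * (y * (y^2 + 4) * fibpoly (2*n+2) y + (x * (y^2 + 2) - 2) * lucpoly (2*n+4) y)
      = x^(n+1) * (y * (y^2+4) * fibpoly (2*n+2) y - 2 * lucpoly (2*n+4) y + (y^2+2) * lucpoly (2*n+2) y) + (y^2 + 2) * (x ^ (n+2) * lucpoly (2*n+4) y - 2)"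
      by (simp add: algebra_simps)
    then show ?thesis using k2 by simp
  qed
  have s: "\<And>f. (\<Sum>k=0..Suc n. f k) = (\<Sum>k=0..n. f k) + f (Suc n)"
    by simp
  have e2: "Suc n + 1 = n + 2" "2*n+2+2 = 2*n+4" by simp_all
  show ?case
  proof
    show "(\<Sum>k=0..Suc n. x ^ k * (y * lucpoly (2*k) y + (x * (y^2 + 2) - 2) * fibpoly (2*k+2) y))
           = x ^ (Suc n+1) * (y^2 + 2) * fibpoly (2*Suc n+2) y"
      unfolding s e e2 using Suc.IH A by (simp only: Suc_eq_plus1 e2)
    show "(\<Sum>k=0..Suc n. x ^ k * (y * (y^2 + 4) * fibpoly (2*k) y + (x * (y^2 + 2) - 2) * lucpoly (2*k+2) y))
           = (y^2 + 2) * (x ^ (Suc n+1) * lucpoly (2*Suc n+2) y - 2)"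
      unfolding s e e2 using Suc.IH B by (simp only: Suc_eq_plus1 e2)
  qed
qed

end
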